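(* Let $\mathcal A$ be finite, $r,\hat r:\mathcal A\to[0,1]$ with $r(a)\ge\hat r(a)$ for all $a\in\mathcal A$, $\eta>0$, and $\pi^{\mathrm{ref}}\in\Delta(\mathcal A)$ with $\pi^{\mathrm{ref}}(a)>0$ for all $a$. If $\hat\pi\in\arg\max_{\pi\in\Delta(\mathcal A)}J(\pi;\hat r)$, then $$\mathrm{SubOpt}(\hat\pi)=J(\pi^*;r)-J(\hat\pi;r)\le2\eta\sum_{a\in\mathcal A}\frac{\pi^*(a)^2}{\pi^{\mathrm{ref}}(a)}\big(r(a)-\hat r(a)\big)^2.$$
   Context: For $f:\mathcal A\to\mathbb R$, $J(\pi;f)=\sum_af(a)\pi(a)-\eta^{-1}\mathrm{KL}(\pi^{\mathrm{ref}}\|\pi)$, where $\mathrm{KL}(P\|Q)=\sum_aP(a)\log(P(a)/Q(a))$. $\pi^*$ denotes the (unique) maximizer of $J(\cdot;r)$ over $\Delta(\mathcal A)$. *)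

theory Defs
  imports "HOL-Analysis.Analysis"
begin

definition prob_simplex :: "'a set \<Rightarrow> ('a \<Rightarrow> real) set" where
  "prob_simplex A = {p. (\<forall>a\<in>A. 0 \<le> p a) \<and> sum p A = 1}"

definition KL :: "'a set \<Rightarrow> ('a \<Rightarrow> real) \<Rightarrow> ('a \<Rightarrow> real) \<Rightarrow> ereal" where
  "KL A P Q = (if \<exists>a\<in>A. P a > 0 \<and> Q a = 0 then \<infinity>
               else ereal (\<Sum>a\<in>{a\<in>A. P a > 0}. P a * ln (P a / Q a)))"

definition Jobj :: "'a set \<Rightarrow> real \<Rightarrow> ('a \<Rightarrow> real) \<Rightarrow> ('a \<Rightarrow> real) \<Rightarrow> ('a \<Rightarrow> real) \<Rightarrow> ereal" where
  "Jobj A \<eta> piref f p = ereal (\<Sum>a\<in>A. f a * p a) - KL A piref p / ereal \<eta>"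

definition is_maximizer :: "'a set \<Rightarrow> real \<Rightarrow> ('a \<Rightarrow> real) \<Rightarrow> ('a \<Rightarrow> real) \<Rightarrow> ('a \<Rightarrow> real) \<Rightarrow> bool" where
  "is_maximizer A \<eta> piref f p \<longleftrightarrow>
     p \<in> prob_simplex A \<and> (\<forall>q\<in>prob_simplex A. Jobj A \<eta> piref f q \<le> Jobj A \<eta> piref f p)"

end

theory Submission
  imports Defs
begin


lemma Jobj_pos:
  assumes "finite A" "\<forall>a\<in>A. piref a > 0" "\<forall>a\<in>A. p a > 0" "\<eta> > 0"
  shows "Jobj A \<eta> piref f p = ereal ((\<Sum>a\<in>A. f a * p a) - (\<Sum>a\<in>A. piref a * ln (piref a / p a)) / \<eta>)"
proof -
  have "{a\<in>A. piref a > 0} = A" using assms by auto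
  moreover have "\<not>(\<exists>a\<in>A. piref a > 0 \<and> p a = 0)" using assms by auto
  ultimately show ?thesis using assms unfolding Jobj_def KL_def by simp
qed

lemma Jobj_zero:
  assumes "a \<in> A" "p a = 0" "piref a > 0" "\<eta> > 0"
  shows "Jobj A \<eta> piref f p = -\<infinity>"
  using assms unfolding Jobj_def KL_def by auto

lemma ln_lower: fixes u :: real assumes "1 + u \<ge> 1/2" shows "ln (1 + u) \<ge> u - 2 * u^2"
proof -
  have pos: "1 + u > 0" using assms by linarith
  have "ln (1/(1+u)) \<le> 1/(1+u) - 1" using pos by (intro ln_le_minus_one) simp
  hence "ln (1+u) \<ge> 1 - 1/(1+u)" using pos by (simp add: ln_div)
  moreover have "1 - 1/(1+u) = u - u^2/(1+u)" using pos by (simp add: field_simps power2_eq_square)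
  moreover have "u^2/(1+u) \<le> 2 * u^2"
  proof -
    have "u^2/(1+u) \<le> u^2/(1/2)" using assms pos by (intro divide_left_mono) auto
    thus ?thesis by simp
  qed
  ultimately show ?thesis by linarith
qed

lemma term_bound:
  fixes x y p D \<eta> :: real
  assumes "x > 0" "y > 0" "p > 0" "D \<ge> 0" "\<eta> > 0"
  shows "D * (x - y) - p / \<eta> * (x / y - 1 - ln (x / y)) \<le> 2 * \<eta> * (x^2 / p * D^2)"
proof (cases "x \<le> y")
  case True
  have "ln (x/y) \<le> x/y - 1" using assms by (intro ln_le_minus_one) simp
  hence "p / \<eta> * (x / y - 1 - ln (x / y)) \<ge> 0" using assms by simp
  moreover have "D * (x - y) \<le> 0" using True assms by (simp add: mult_nonneg_nonpos)
  moreover have "2 * \<eta> * (x^2 / p * D^2) \<ge> 0" using assms by simp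
  ultimately show ?thesis by linarith
next
  case False
  define w where "w = sqrt (x/y)"
  have w1: "w > 1" using False assms unfolding w_def by (simp add: field_simps)
  have ww: "w^2 = x/y" unfolding w_def using assms by simp
  have "ln (x/y) = ln (w^2)" using ww by simp
  also have "\<dots> = 2 * ln w" using w1 by (simp add: ln_realpow)
  also have "\<dots> \<le> 2 * (w - 1)" using w1 ln_le_minus_one[of w] by simp
  finally have lnb: "ln (x/y) \<le> 2*(w-1)" .
  have phi: "x / y - 1 - ln (x / y) \<ge> (w-1)^2" using lnb ww by (simp add: power2_eq_square algebra_simps)
  have xy: "x - y = x * (w-1) * ((w+1)/w^2)" using ww w1 assms by (simp add: field_simps power2_eq_square)
  have "1*w < w*w" using w1 by (intro mult_strict_right_mono) auto
  hence "w + 1 \<le> 2 * w^2" using w1 unfolding power2_eq_square by linarith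
  hence k: "(w+1)/w^2 \<le> 2" using w1 by (simp add: divide_le_eq)
  define b where "b = p/\<eta>"
  have b0: "b > 0" using assms unfolding b_def by simp
  have "D * (x - y) \<le> 2 * (D * x) * (w - 1)"
  proof -
    have "D * (x - y) = (D*x*(w-1)) * ((w+1)/w^2)" using xy by simp
    also have "\<dots> \<le> (D*x*(w-1)) * 2" using k w1 assms by (intro mult_left_mono) auto
    finally show ?thesis by simp
  qed
  moreover have "b * (x / y - 1 - ln (x / y)) \<ge> b * (w-1)^2" using phi b0 by simp
  moreover have "2 * (D * x) * (w - 1) - b * (w-1)^2 \<le> (D*x)^2 / b"
  proof -
    have "0 \<le> (D*x - b*(w-1))^2 / b" using b0 by simp
    also have "(D*x - b*(w-1))^2 / b = (D*x)^2 / b - (2 * (D * x) * (w - 1) - b * (w-1)^2)"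
      using b0 by (simp add: field_simps power2_eq_square)
    finally show ?thesis by simp
  qed
  moreover have "(D*x)^2 / b \<le> 2 * \<eta> * (x^2 / p * D^2)"
    using assms unfolding b_def by (simp add: field_simps power2_eq_square)
  ultimately show ?thesis unfolding b_def by linarith
qed


lemma max_pos:
  assumes "finite A" "piref \<in> prob_simplex A" "\<forall>a\<in>A. piref a > 0" "\<eta> > 0"
    "is_maximizer A \<eta> piref f p"
  shows "\<forall>a\<in>A. p a > 0"
proof
  fix a assume a: "a \<in> A"
  have ps: "p \<in> prob_simplex A" and le: "Jobj A \<eta> piref f piref \<le> Jobj A \<eta> piref f p"
    using assms unfolding is_maximizer_def by auto
  have "p a \<ge> 0" using ps a unfolding prob_simplex_def by auto
  moreover have "p a \<noteq> 0"
  proof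
    assume "p a = 0"
    hence "Jobj A \<eta> piref f p = -\<infinity>" using Jobj_zero[of a A p piref \<eta> f] a assms by auto
    moreover have "Jobj A \<eta> piref f piref \<noteq> -\<infinity>" using Jobj_pos[of A piref piref \<eta> f] assms by simp
    ultimately show False using le by simp
  qed
  ultimately show "p a > 0" by simp
qed

lemma foc:
  assumes fin: "finite A" and pr: "\<forall>a\<in>A. piref a > 0" and eta: "\<eta> > 0"
    and mx: "is_maximizer A \<eta> piref f p" and pp: "\<forall>a\<in>A. p a > 0" and q: "q \<in> prob_simplex A"
  shows "(\<Sum>a\<in>A. f a * (q a - p a)) + (\<Sum>a\<in>A. piref a * (q a - p a) / p a) / \<eta> \<le> 0"
proof -
  define d where "d a = q a - p a" for a
  define S where "S = (\<Sum>a\<in>A. f a * d a) + (\<Sum>a\<in>A. piref a * d a / p a) / \<eta>"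
  define K where "K = 2 / \<eta> * (\<Sum>a\<in>A. piref a * (d a / p a)^2)"
  have "(\<Sum>a\<in>A. piref a * (d a / p a)^2) \<ge> 0" using pr by (intro sum_nonneg) (simp add: less_imp_le)
  hence K0: "K \<ge> 0" unfolding K_def using eta by simp
  have ps: "p \<in> prob_simplex A" using mx unfolding is_maximizer_def by auto
  have step: "S \<le> t * K" if t0: "0 < t" and t1: "t \<le> 1/2" for t
  proof -
    define pt where "pt a = p a + t * d a" for a
    have q0: "\<forall>a\<in>A. q a \<ge> 0" using q unfolding prob_simplex_def by auto
    have ptp: "pt a \<ge> (1 - t) * p a" if "a \<in> A" for a
      using q0 that t0 unfolding pt_def d_def by (simp add: algebra_simps)
    have ptpos: "\<forall>a\<in>A. pt a > 0"
    proof
      fix a assume a: "a \<in> A"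
      have "(1 - t) * p a > 0" using pp a t1 by simp
      thus "pt a > 0" using ptp[OF a] by linarith
    qed
    have "sum pt A = sum p A + t * (sum q A - sum p A)"
      unfolding pt_def d_def by (simp add: sum.distrib sum_subtractf sum_distrib_left[symmetric] right_diff_distrib)
    hence "sum pt A = 1" using ps q unfolding prob_simplex_def by simp
    hence ptS: "pt \<in> prob_simplex A" using ptpos unfolding prob_simplex_def by auto
    hence "Jobj A \<eta> piref f pt \<le> Jobj A \<eta> piref f p" using mx unfolding is_maximizer_def by auto
    hence ineq: "(\<Sum>a\<in>A. f a * pt a) - (\<Sum>a\<in>A. piref a * ln (piref a / pt a)) / \<eta>
        \<le> (\<Sum>a\<in>A. f a * p a) - (\<Sum>a\<in>A. piref a * ln (piref a / p a)) / \<eta>"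
      using Jobj_pos[OF fin pr ptpos eta] Jobj_pos[OF fin pr pp eta] by simp
    define u where "u a = t * d a / p a" for a
    have lnrel: "piref a * ln (piref a / p a) - piref a * ln (piref a / pt a) = piref a * ln (1 + u a)"
      if a: "a \<in> A" for a
    proof -
      have "p a > 0" using pp a by auto
      hence "pt a = p a * (1 + u a)" unfolding pt_def u_def by (simp add: field_simps)
      moreover have "1 + u a > 0" using pp a ptpos calculation by (metis zero_less_mult_pos)
      moreover have "p a > 0" using pp a by auto
      ultimately have l: "ln (pt a) = ln (p a) + ln (1 + u a)" by (simp add: ln_mult)
      have pa: "p a > 0" "piref a > 0" "pt a > 0" using pp pr ptpos a by auto
      have "ln (piref a / p a) = ln (piref a) - ln (p a)" "ln (piref a / pt a) = ln (piref a) - ln (pt a)"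
        using pa by (simp_all add: ln_div)
      hence e: "ln (piref a / p a) = ln (1 + u a) + ln (piref a / pt a)" using l by linarith
      show ?thesis unfolding e by (simp add: algebra_simps)
    qed
    have lnb: "piref a * ln (1 + u a) \<ge> piref a * (u a - 2 * (u a)^2)" if a: "a \<in> A" for a
    proof -
      have "p a > 0" using pp a by auto
      hence "1 + u a = pt a / p a" unfolding pt_def u_def by (simp add: field_simps)
      also have "\<dots> \<ge> (1 - t)" using ptp[OF a] pp a by (simp add: le_divide_eq)
      finally have "1 + u a \<ge> 1/2" using t1 by linarith
      thus ?thesis using ln_lower pr a by (simp add: mult_left_mono)
    qed
    have "t * (\<Sum>a\<in>A. f a * d a) = (\<Sum>a\<in>A. f a * pt a) - (\<Sum>a\<in>A. f a * p a)"
      unfolding pt_def by (simp add: sum_distrib_left sum_subtractf[symmetric] algebra_simps)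
    also have "\<dots> \<le> ((\<Sum>a\<in>A. piref a * ln (piref a / pt a)) - (\<Sum>a\<in>A. piref a * ln (piref a / p a))) / \<eta>"
      using ineq by (simp add: diff_divide_distrib)
    also have "(\<Sum>a\<in>A. piref a * ln (piref a / pt a)) - (\<Sum>a\<in>A. piref a * ln (piref a / p a))
        = - (\<Sum>a\<in>A. piref a * ln (1 + u a))"
      using lnrel by (simp add: sum_subtractf[symmetric] sum_negf[symmetric] algebra_simps)
    also have "(\<Sum>a\<in>A. piref a * ln (1 + u a)) \<ge> (\<Sum>a\<in>A. piref a * (u a - 2 * (u a)^2))"
      using lnb by (intro sum_mono) auto
    hence "- (\<Sum>a\<in>A. piref a * ln (1 + u a)) / \<eta> \<le> - (\<Sum>a\<in>A. piref a * (u a - 2 * (u a)^2)) / \<eta>"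
      using eta by (simp add: divide_right_mono)
    also have "(\<Sum>a\<in>A. piref a * (u a - 2 * (u a)^2)) = t * (\<Sum>a\<in>A. piref a * d a / p a) - t^2 * (\<Sum>a\<in>A. piref a * (d a / p a)^2) * 2"
      unfolding u_def by (simp add: sum_subtractf[symmetric] sum_distrib_left sum_distrib_right algebra_simps power2_eq_square)
    finally have "t * (\<Sum>a\<in>A. f a * d a) \<le> - (t * (\<Sum>a\<in>A. piref a * d a / p a) - t^2 * (\<Sum>a\<in>A. piref a * (d a / p a)^2) * 2) / \<eta>" .
    hence F: "t * (\<Sum>a\<in>A. f a * d a) \<le> - (t * (\<Sum>a\<in>A. piref a * d a / p a)) / \<eta> + t^2 * (\<Sum>a\<in>A. piref a * (d a / p a)^2) * 2 / \<eta>"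
      by (simp add: diff_divide_distrib)
    have "t * S = t * (\<Sum>a\<in>A. f a * d a) + (t * (\<Sum>a\<in>A. piref a * d a / p a)) / \<eta>"
      unfolding S_def by (simp add: algebra_simps)
    moreover have "t * (t * K) = t^2 * (\<Sum>a\<in>A. piref a * (d a / p a)^2) * 2 / \<eta>"
      unfolding K_def by (simp add: power2_eq_square)
    ultimately have "t * S \<le> t * (t * K)" using F by simp
    thus ?thesis using t0 by simp
  qed
  have "S \<le> 0"
  proof (rule ccontr)
    assume "\<not> S \<le> 0"
    hence S0: "S > 0" by simp
    define t where "t = min (1/2) (S / (2 * (K + 1)))"
    have t0: "t > 0" unfolding t_def using S0 K0 by simp
    have "t * K \<le> S / (2 * (K + 1)) * K" unfolding t_def using K0 by (intro mult_right_mono) auto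
    also have "\<dots> < S" using S0 K0 by (simp add: field_simps add_nonneg_pos)
    finally have "t * K < S" .
    moreover have "t \<le> 1/2" unfolding t_def by (rule min.cobounded1)
    ultimately show False using step[OF t0] by linarith
  qed
  thus ?thesis unfolding S_def d_def .
qed



theorem lemma5p5:
  fixes A :: "'a set" and r rhat piref pistar pihat :: "'a \<Rightarrow> real" and \<eta> :: real
  assumes "finite A"
    and "\<forall>a\<in>A. 0 \<le> r a \<and> r a \<le> 1"
    and "\<forall>a\<in>A. 0 \<le> rhat a \<and> rhat a \<le> 1"
    and "\<forall>a\<in>A. rhat a \<le> r a"
    and "\<eta> > 0"
    and "piref \<in> prob_simplex A" and "\<forall>a\<in>A. piref a > 0"
    and "is_maximizer A \<eta> piref r pistar"
    and "is_maximizer A \<eta> piref rhat pihat"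
  shows "Jobj A \<eta> piref r pistar - Jobj A \<eta> piref r pihat
         \<le> ereal (2 * \<eta> * (\<Sum>a\<in>A. (pistar a)\<^sup>2 / piref a * (r a - rhat a)\<^sup>2))"
  proof -
  note fin = assms(1) and eta = assms(5) and pr = assms(7)
  have ps: "pistar \<in> prob_simplex A" using assms(8) unfolding is_maximizer_def by auto
  have pspos: "\<forall>a\<in>A. pistar a > 0" using max_pos[OF fin assms(6) pr eta assms(8)] .
  have phpos: "\<forall>a\<in>A. pihat a > 0" using max_pos[OF fin assms(6) pr eta assms(9)] .
  have F: "(\<Sum>a\<in>A. rhat a * (pistar a - pihat a)) + (\<Sum>a\<in>A. piref a * (pistar a - pihat a) / pihat a) / \<eta> \<le> 0"
    using foc[OF fin pr eta assms(9) phpos ps] .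
  define T where "T a = (r a - rhat a) * (pistar a - pihat a)
     - piref a / \<eta> * (pistar a / pihat a - 1 - ln (pistar a / pihat a))" for a
  have pt: "r a * pistar a - r a * pihat a - (piref a * ln (piref a / pistar a) - piref a * ln (piref a / pihat a)) / \<eta>
      = (rhat a * (pistar a - pihat a) + piref a * (pistar a - pihat a) / pihat a / \<eta>) + T a" if a: "a \<in> A" for a
  proof -
    have pa: "pistar a > 0" "pihat a > 0" "piref a > 0" using a pspos phpos pr by auto
    have "ln (piref a / pistar a) - ln (piref a / pihat a) = - ln (pistar a / pihat a)"
      using pa by (simp add: ln_div)
    hence e: "piref a * ln (piref a / pistar a) - piref a * ln (piref a / pihat a) = - (piref a * ln (pistar a / pihat a))"
      by (metis right_diff_distrib mult_minus_right)
    have "piref a * (pistar a / pihat a - 1) = piref a * (pistar a - pihat a) / pihat a"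
      using pa by (simp add: field_simps)
    thus ?thesis unfolding e T_def using eta pa by (simp add: field_simps)
  qed
  have "(\<Sum>a\<in>A. r a * pistar a) - (\<Sum>a\<in>A. piref a * ln (piref a / pistar a)) / \<eta>
      - ((\<Sum>a\<in>A. r a * pihat a) - (\<Sum>a\<in>A. piref a * ln (piref a / pihat a)) / \<eta>)
    = (\<Sum>a\<in>A. r a * pistar a - r a * pihat a - (piref a * ln (piref a / pistar a) - piref a * ln (piref a / pihat a)) / \<eta>)"
    by (simp add: sum_subtractf sum_divide_distrib[symmetric] diff_divide_distrib)
  also have "\<dots> = (\<Sum>a\<in>A. (rhat a * (pistar a - pihat a) + piref a * (pistar a - pihat a) / pihat a / \<eta>) + T a)"
    using pt by (rule sum.cong[OF refl])
  also have "\<dots> = ((\<Sum>a\<in>A. rhat a * (pistar a - pihat a)) + (\<Sum>a\<in>A. piref a * (pistar a - pihat a) / pihat a) / \<eta>) + (\<Sum>a\<in>A. T a)"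
    by (simp add: sum.distrib sum_divide_distrib)
  also have "\<dots> \<le> (\<Sum>a\<in>A. T a)" using F by simp
  also have "\<dots> \<le> (\<Sum>a\<in>A. 2 * \<eta> * ((pistar a)\<^sup>2 / piref a * (r a - rhat a)\<^sup>2))"
  proof (rule sum_mono)
    fix a assume a: "a \<in> A"
    show "T a \<le> 2 * \<eta> * ((pistar a)\<^sup>2 / piref a * (r a - rhat a)\<^sup>2)"
      unfolding T_def using term_bound[of "pistar a" "pihat a" "piref a" "r a - rhat a" \<eta>]
        a pspos phpos pr eta assms(4) by auto
  qed
  also have "\<dots> = 2 * \<eta> * (\<Sum>a\<in>A. (pistar a)\<^sup>2 / piref a * (r a - rhat a)\<^sup>2)"
    by (simp add: sum_distrib_left)
  finally have R: "(\<Sum>a\<in>A. r a * pistar a) - (\<Sum>a\<in>A. piref a * ln (piref a / pistar a)) / \<eta>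
      - ((\<Sum>a\<in>A. r a * pihat a) - (\<Sum>a\<in>A. piref a * ln (piref a / pihat a)) / \<eta>)
      \<le> 2 * \<eta> * (\<Sum>a\<in>A. (pistar a)\<^sup>2 / piref a * (r a - rhat a)\<^sup>2)" .
  show ?thesis using R Jobj_pos[OF fin pr pspos eta, of r] Jobj_pos[OF fin pr phpos eta, of r] by simp
qed

end
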